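(* For every $n \ge 1$ and every proximity parameter $0<\epsilon<1$, there exists a non-adaptive $\epsilon$-tester with one-sided error for convexity of functions $f\colon [n]\to\mathbb{R}$, where $[n]=\{0,1,\dots,n-1\}$, whose query complexity is $O\!\left(\frac{\log(\epsilon n)}{\epsilon}\right)$.
   Context: A function $f\colon X\to\mathbb{R}$ on a finite set $X\subseteq\mathbb{R}^d$ is convex if for every finite collection $x_1,\dots,x_k\in X$ and reals $\lambda_i\ge 0$ with $\sum_i\lambda_i=1$ and $\sum_i\lambda_i x_i\in X$, one has $f(\sum_i\lambda_i x_i)\le\sum_i\lambda_i f(x_i)$. A function $g\colon X\to\mathbb{R}$ is $\epsilon$-far from convex if every convex $h\colon X\to\mathbb{R}$ differs from $g$ on at least $\epsilon|X|$ points of $X$. An $\epsilon$-tester for convexity is a randomized algorithm that queries values of an unknown $f$ and accepts with probability at least $2/3$ if $f$ is convex and rejects with probability at least $2/3$ if $f$ is $\epsilon$-far from convex; it has one-sided error if it accepts every convex function with probability $1$, and is non-adaptive if all queried points are chosen before any value is observed. The query complexity is the worst-case number of queries. *)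

theory Defs
  imports "HOL-Probability.Probability"
begin

text \<open>Domain [n] = {0,...,n-1}, viewed as a subset of the reals. A function on [n] is
  represented by f :: nat => real; only its values on {0..<n} matter.\<close>

definition convex_on_grid :: "nat \<Rightarrow> (nat \<Rightarrow> real) \<Rightarrow> bool" where
  "convex_on_grid n f \<longleftrightarrow>
     (\<forall>(k::nat) (x::nat \<Rightarrow> nat) (lam::nat \<Rightarrow> real) (m::nat).
        (\<forall>i<k. x i < n \<and> lam i \<ge> 0) \<and> (\<Sum>i<k. lam i) = 1 \<and> m < n \<and>
        (\<Sum>i<k. lam i * real (x i)) = real m
        \<longrightarrow> f m \<le> (\<Sum>i<k. lam i * f (x i)))"

definition far_from_convex :: "nat \<Rightarrow> real \<Rightarrow> (nat \<Rightarrow> real) \<Rightarrow> bool" where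
  "far_from_convex n \<epsilon> g \<longleftrightarrow>
     (\<forall>h. convex_on_grid n h \<longrightarrow> real (card {x\<in>{0..<n}. g x \<noteq> h x}) \<ge> \<epsilon> * real n)"

text \<open>A non-adaptive randomized tester: a probability distribution over pairs (Q, D) of a
  query set Q \<subseteq> [n] (chosen before any value is seen) and a decision rule D
  (True = accept) that depends only on the values of f on Q. Internal randomness of the
  decision is absorbed into the distribution.\<close>

definition accept_prob :: "(nat set \<times> ((nat \<Rightarrow> real) \<Rightarrow> bool)) pmf \<Rightarrow> (nat \<Rightarrow> real) \<Rightarrow> real" where
  "accept_prob T f = measure_pmf.prob T {(Q, D). D f}"

definition nonadaptive_tester ::
  "nat \<Rightarrow> (nat set \<times> ((nat \<Rightarrow> real) \<Rightarrow> bool)) pmf \<Rightarrow> bool" where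
  "nonadaptive_tester n T \<longleftrightarrow>
     (\<forall>(Q, D) \<in> set_pmf T. Q \<subseteq> {0..<n} \<and>
        (\<forall>f g. (\<forall>x\<in>Q. f x = g x) \<longrightarrow> D f = D g))"

definition query_complexity_le ::
  "(nat set \<times> ((nat \<Rightarrow> real) \<Rightarrow> bool)) pmf \<Rightarrow> real \<Rightarrow> bool" where
  "query_complexity_le T q \<longleftrightarrow> (\<forall>(Q, D) \<in> set_pmf T. real (card Q) \<le> q)"

definition one_sided_convexity_tester ::
  "nat \<Rightarrow> real \<Rightarrow> (nat set \<times> ((nat \<Rightarrow> real) \<Rightarrow> bool)) pmf \<Rightarrow> bool" where
  "one_sided_convexity_tester n \<epsilon> T \<longleftrightarrow>
     nonadaptive_tester n T \<and>
     (\<forall>f. convex_on_grid n f \<longrightarrow> accept_prob T f = 1) \<and>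
     (\<forall>f. far_from_convex n \<epsilon> f \<longrightarrow> accept_prob T f \<le> 1/3)"

end

theory Submission
  imports Defs
begin


definition lo :: "nat \<Rightarrow> nat \<Rightarrow> nat" where "lo j y = y div 2^j * 2^j"
definition hi :: "nat \<Rightarrow> nat \<Rightarrow> nat" where "hi j y = (y div 2^j + 1) * 2^j"
definition DD :: "nat \<Rightarrow> nat \<Rightarrow> nat set" where "DD K y = (\<Union>j\<in>{..K}. {lo j y, hi j y})"

lemma hi_lo: "hi j y = lo j y + 2^j" by (simp add: lo_def hi_def algebra_simps)
lemma lo_le: "lo j y \<le> y" by (simp add: lo_def)
lemma hi_gt: "y < hi j y"
proof -
  have m: "y mod 2^j < 2^j" by simp
  have e: "y div 2^j * 2^j + y mod 2^j = y" by (rule div_mult_mod_eq)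
  have "hi j y = y div 2^j * 2^j + 2^j" by (simp add: hi_def algebra_simps)
  then show ?thesis using m e by linarith
qed
lemma lo0[simp]: "lo 0 y = y" by (simp add: lo_def)
lemma hi0[simp]: "hi 0 y = y + 1" by (simp add: hi_def)
lemma lo_dvd: "2^j dvd lo j y" by (simp add: lo_def)
lemma hi_dvd: "2^j dvd hi j y" by (simp add: hi_def)

lemma lo_step: "lo (Suc j) y = lo j y \<or> lo (Suc j) y + 2^j = lo j y"
proof -
  define q where "q = y div 2^j"
  have "y div 2^Suc j = q div 2" by (simp only: power_Suc2 div_mult2_eq q_def)
  then have e1: "lo (Suc j) y = (q div 2) * 2 * 2^j" by (simp add: lo_def)
  have e2: "lo j y = q * 2^j" by (simp add: lo_def q_def)
  have "q mod 2 = 0 \<or> q mod 2 = 1" by auto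
  then show ?thesis
  proof
    assume "q mod 2 = 0"
    then have "q div 2 * 2 = q" by presburger
    then show ?thesis using e1 e2 by simp
  next
    assume "q mod 2 = 1"
    then have "q div 2 * 2 + 1 = q" by presburger
    then have "lo j y = (q div 2 * 2 + 1) * 2^j" using e2 by simp
    then show ?thesis using e1 by (simp add: algebra_simps)
  qed
qed

lemma hi_step: "hi (Suc j) y = hi j y \<or> hi (Suc j) y = hi j y + 2^j"
proof -
  have h1: "hi (Suc j) y = lo (Suc j) y + 2 * 2^j" "hi j y = lo j y + 2^j"
    using hi_lo[of "Suc j" y] hi_lo[of j y] by simp_all
  from lo_step[of j y] show ?thesis
  proof
    assume "lo (Suc j) y = lo j y"
    then have "hi (Suc j) y = hi j y + 2^j" using h1 by linarith
    then show ?thesis by (rule disjI2)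
  next
    assume "lo (Suc j) y + 2^j = lo j y"
    then have "hi (Suc j) y = hi j y" using h1 by linarith
    then show ?thesis by (rule disjI1)
  qed
qed

lemma lo_mono: "j \<le> j' \<Longrightarrow> lo j' y \<le> lo j y"
proof (induction j' rule: dec_induct)
  case base then show ?case by simp
next
  case (step m) then show ?case using lo_step[of m y] by linarith
qed

lemma mult_pow_gap:
  fixes M d i :: nat
  assumes "2^i dvd M" "2^i dvd d" "M < d" shows "M + 2^i \<le> d"
proof -
  obtain p q where "M = 2^i * p" "d = 2^i * q" using assms by (auto elim!: dvdE)
  with assms have "p < q" by simp
  then have "2^i * (p+1) \<le> 2^i * q" by (intro mult_le_mono2) simp
  then show ?thesis using \<open>M = _\<close> \<open>d = _\<close> by (simp add: algebra_simps)
qed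

lemma laminar:
  assumes d: "d = lo i x \<or> d = hi i x" and M: "2^j dvd M" and "M < d" "d < M + 2^j"
  shows "hi j x = M + 2^j"
proof -
  have di: "2^i dvd d" using d lo_dvd hi_dvd by blast
  have "i < j"
  proof (rule ccontr)
    assume "\<not> i < j"
    then have "2^j dvd d" using di by (meson dvd_trans le_imp_power_dvd not_less)
    then have "M + 2^j \<le> d" using mult_pow_gap[OF M _ \<open>M < d\<close>] by simp
    then show False using \<open>d < M + 2^j\<close> by simp
  qed
  then have Mi: "2^i dvd M" using M by (meson dvd_trans le_imp_power_dvd less_imp_le)
  have jdvd: "2^i dvd M + 2^j" using Mi \<open>i < j\<close> by (simp add: le_imp_power_dvd)
  have g1: "M + 2^i \<le> d" by (rule mult_pow_gap[OF Mi di \<open>M < d\<close>])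
  have g2: "d + 2^i \<le> M + 2^j" by (rule mult_pow_gap[OF di jdvd \<open>d < M + 2^j\<close>])
  have "lo i x \<le> x" "x < hi i x" "hi i x = lo i x + 2^i" by (rule lo_le, rule hi_gt, rule hi_lo)
  then have x1: "M \<le> x" "x < M + 2^j" using d g1 g2 by auto
  obtain c where c: "M = 2^j * c" using M by (auto elim!: dvdE)
  have "x div 2^j = c"
    using x1 c by (intro div_nat_eqI) (simp_all add: algebra_simps)
  then show ?thesis by (simp add: hi_def c algebra_simps)
qed



lemma DD_iff: "v \<in> DD K y \<longleftrightarrow> (\<exists>j\<le>K. v = lo j y \<or> v = hi j y)"
  by (auto simp: DD_def)

lemma self_in_DD: "y \<in> DD K y" unfolding DD_iff by (rule exI[of _ 0]) simp

lemma core: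
  assumes de: "d < e" and dx: "d \<in> DD K x" and ey: "e \<in> DD K y"
    and dny: "d \<notin> DD K y" and eK: "\<not> 2^K dvd e"
    and gap: "\<forall>v\<in>DD K y. \<not> (d < v \<and> v < e)"
  shows "e \<in> DD K x"
proof -
  obtain i where i: "i \<le> K" "d = lo i x \<or> d = hi i x" using dx unfolding DD_iff by blast
  obtain i' where i': "i' \<le> K" "e = lo i' y \<or> e = hi i' y" using ey unfolding DD_iff by blast
  have yD: "y \<in> DD K y" by (rule self_in_DD)
  have "y \<noteq> d" using yD dny by blast
  moreover have "\<not> (d < y \<and> y < e)" using gap yD by blast
  ultimately have "y < d \<or> e \<le> y" by linarith
  then show ?thesis
  proof
    assume yd: "y < d"
    have ehi: "e = hi i' y" using i'(2) lo_le[of i' y] yd de by auto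
    define j where "j = (LEAST j. hi j y = e)"
    have hj: "hi j y = e" unfolding j_def by (rule LeastI[of _ i']) (simp add: ehi)
    have jle: "j \<le> i'" unfolding j_def by (rule Least_le) (simp add: ehi)
    have "j \<noteq> 0" using hj yd de by (intro notI) simp
    then obtain j' where jj: "j = Suc j'" by (cases j) auto
    have ne: "hi j' y \<noteq> e"
    proof
      assume "hi j' y = e"
      then have "j \<le> j'" unfolding j_def by (rule Least_le)
      then show False using jj by simp
    qed
    have eM: "e = hi j' y + 2^j'" using hi_step[of j' y] hj jj ne by auto
    have "hi j' y \<in> DD K y" unfolding DD_iff using jle jj i'(1) by (intro exI[of _ j']) auto
    then have "\<not> (d < hi j' y)" using gap eM by auto
    moreover have "hi j' y \<noteq> d" using dny \<open>hi j' y \<in> DD K y\<close> by auto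
    ultimately have Md: "hi j' y < d" by simp
    have "hi j' x = hi j' y + 2^j'"
      by (rule laminar[OF i(2) hi_dvd Md]) (use de eM in simp)
    then have "e = hi j' x" using eM by simp
    then show ?thesis unfolding DD_iff using jle jj i'(1) by (intro exI[of _ j']) auto
  next
    assume ey2: "e \<le> y"
    have elo: "e = lo i' y" using i'(2) hi_gt[of y i'] ey2 by auto
    have loK: "lo K y < e"
    proof -
      have "lo K y \<le> e" using lo_mono[OF i'(1), of y] elo by simp
      moreover have "lo K y \<noteq> e" using eK lo_dvd[of K y] by auto
      ultimately show ?thesis by simp
    qed
    define j where "j = (LEAST j. lo j y < e)"
    have hj: "lo j y < e" unfolding j_def by (rule LeastI[of _ K]) (rule loK)
    have jle: "j \<le> K" unfolding j_def by (rule Least_le) (rule loK)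
    have "j \<noteq> 0" using hj ey2 by (intro notI) simp
    then obtain j' where jj: "j = Suc j'" by (cases j) auto
    have ge: "\<not> lo j' y < e"
    proof
      assume "lo j' y < e"
      then have "j \<le> j'" unfolding j_def by (rule Least_le)
      then show False using jj by simp
    qed
    have "i' \<le> j'"
    proof (rule ccontr)
      assume "\<not> i' \<le> j'"
      then have "j \<le> i'" using jj by simp
      then have "lo i' y \<le> lo j y" by (rule lo_mono)
      then show False using hj elo by simp
    qed
    then have "lo j' y \<le> e" using lo_mono elo by simp
    then have lje: "lo j' y = e" using ge by simp
    have eM: "e = lo j y + 2^j'" using lo_step[of j' y] jj lje hj by auto
    have "lo j y \<in> DD K y" unfolding DD_iff using jle by auto
    then have "\<not> (d < lo j y)" using gap hj by auto
    moreover have "lo j y \<noteq> d" using dny \<open>lo j y \<in> DD K y\<close> by auto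
    ultimately have Md: "lo j y < d" by simp
    have dv: "2^j' dvd lo j y" 
      by (rule dvd_trans[OF le_imp_power_dvd lo_dvd]) (simp add: jj)
    have "hi j' x = lo j y + 2^j'"
      by (rule laminar[OF i(2) dv Md]) (use de eM in simp)
    then have "e = hi j' x" using eM by simp
    then show ?thesis unfolding DD_iff using jle jj by (intro exI[of _ j']) auto
  qed
qed



definition convS :: "(nat \<Rightarrow> real) \<Rightarrow> nat set \<Rightarrow> bool" where
  "convS f S \<longleftrightarrow> (\<forall>a\<in>S. \<forall>b\<in>S. \<forall>c\<in>S. a < b \<and> b < c \<longrightarrow>
      (real c - real a) * f b \<le> (real c - real b) * f a + (real b - real a) * f c)"

lemma comb1:
  fixes A P B C fa fp fb fc :: real
  assumes "A < P" "P < B" "B < C"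
    and h1: "(B - A) * fp \<le> (B - P) * fa + (P - A) * fb"
    and h2: "(C - P) * fb \<le> (C - B) * fp + (B - P) * fc"
  shows "(C - A) * fb \<le> (C - B) * fa + (B - A) * fc"
proof -
  have X: "0 \<le> (B-A)*((C-B)*fp + (B-P)*fc) - (B-A)*((C-P)*fb)"
    using mult_left_mono[OF h2, of "B-A"] assms(1,2) by simp
  have Y: "0 \<le> (C-B)*((B-P)*fa + (P-A)*fb) - (C-B)*((B-A)*fp)"
    using mult_left_mono[OF h1, of "C-B"] assms(3) by simp
  have Z: "(B-P)*((C-B)*fa + (B-A)*fc - (C-A)*fb) =
      ((B-A)*((C-B)*fp + (B-P)*fc) - (B-A)*((C-P)*fb)) + ((C-B)*((B-P)*fa + (P-A)*fb) - (C-B)*((B-A)*fp))"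
    by (simp add: algebra_simps)
  have "0 \<le> (B-P)*((C-B)*fa + (B-A)*fc - (C-A)*fb)" using X Y Z by linarith
  then have "0 \<le> (C-B)*fa + (B-A)*fc - (C-A)*fb" using assms(2) by (simp add: zero_le_mult_iff)
  then show ?thesis by linarith
qed

lemma comb2:
  fixes A Q B C fa fq fb fc :: real
  assumes "A < B" "B < Q" "Q < C"
    and h1: "(Q - A) * fb \<le> (Q - B) * fa + (B - A) * fq"
    and h2: "(C - B) * fq \<le> (C - Q) * fb + (Q - B) * fc"
  shows "(C - A) * fb \<le> (C - B) * fa + (B - A) * fc"
proof -
  have X: "0 \<le> (C-B)*((Q-B)*fa + (B-A)*fq) - (C-B)*((Q-A)*fb)"
    using mult_left_mono[OF h1, of "C-B"] assms by simp
  have Y: "0 \<le> (B-A)*((C-Q)*fb + (Q-B)*fc) - (B-A)*((C-B)*fq)"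
    using mult_left_mono[OF h2, of "B-A"] assms by simp
  have Z: "(Q-B)*((C-B)*fa + (B-A)*fc - (C-A)*fb) =
      ((C-B)*((Q-B)*fa + (B-A)*fq) - (C-B)*((Q-A)*fb)) + ((B-A)*((C-Q)*fb + (Q-B)*fc) - (B-A)*((C-B)*fq))"
    by (simp add: algebra_simps)
  have "0 \<le> (Q-B)*((C-B)*fa + (B-A)*fc - (C-A)*fb)" using X Y Z by linarith
  then have "0 \<le> (C-B)*fa + (B-A)*fc - (C-A)*fb" using assms(2) by (simp add: zero_le_mult_iff)
  then show ?thesis by linarith
qed

lemma local_global:
  fixes f :: "nat \<Rightarrow> real" and U :: "nat set"
  assumes loc: "\<And>a b c. a \<in> U \<Longrightarrow> b \<in> U \<Longrightarrow> c \<in> U \<Longrightarrow> a < b \<Longrightarrow> b < c \<Longrightarrow>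
      (\<forall>u\<in>U. \<not> (a < u \<and> u < b)) \<Longrightarrow> (\<forall>u\<in>U. \<not> (b < u \<and> u < c)) \<Longrightarrow>
      (real c - real a) * f b \<le> (real c - real b) * f a + (real b - real a) * f c"
  shows "convS f U"
proof -
  have main: "\<forall>a b c. c - a = m \<longrightarrow> a \<in> U \<longrightarrow> b \<in> U \<longrightarrow> c \<in> U \<longrightarrow> a < b \<longrightarrow> b < c \<longrightarrow>
      (real c - real a) * f b \<le> (real c - real b) * f a + (real b - real a) * f c" for m
  proof (induction m rule: less_induct)
    case (less m)
    show ?case
    proof (intro allI impI)
      fix a b c assume m: "c - a = m" and in3: "a \<in> U" "b \<in> U" "c \<in> U" and o: "a < b" "b < c"
      show "(real c - real a) * f b \<le> (real c - real b) * f a + (real b - real a) * f c"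
      proof (cases "\<exists>p\<in>U. a < p \<and> p < b")
        case True
        then obtain p where p: "p \<in> U" "a < p" "p < b" by blast
        have i1: "(real b - real a) * f p \<le> (real b - real p) * f a + (real p - real a) * f b"
          using less.IH[of "b - a"] m o p in3 by auto
        have i2: "(real c - real p) * f b \<le> (real c - real b) * f p + (real b - real p) * f c"
          using less.IH[of "c - p"] m o p in3 by auto
        show ?thesis by (rule comb1[OF _ _ _ i1 i2]) (use o p in auto)
      next
        case F1: False
        show ?thesis
        proof (cases "\<exists>q\<in>U. b < q \<and> q < c")
          case True
          then obtain q where q: "q \<in> U" "b < q" "q < c" by blast
          have i1: "(real q - real a) * f b \<le> (real q - real b) * f a + (real b - real a) * f q"
            using less.IH[of "q - a"] m o q in3 by auto
          have i2: "(real c - real b) * f q \<le> (real c - real q) * f b + (real q - real b) * f c"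
            using less.IH[of "c - b"] m o q in3 by auto
          show ?thesis by (rule comb2[OF _ _ _ i1 i2]) (use o q in auto)
        next
          case False
          then show ?thesis using F1 loc[OF in3 o] by blast
        qed
      qed
    qed
  qed
  show ?thesis unfolding convS_def using main by blast
qed

lemma convS_subset: "convS f S \<Longrightarrow> T \<subseteq> S \<Longrightarrow> convS f T"
  unfolding convS_def by blast

lemma grid_convS:
  assumes "convex_on_grid n f" "S \<subseteq> {..<n}" shows "convS f S"
  unfolding convS_def
proof (intro ballI impI)
  fix a b c assume abc: "a \<in> S" "b \<in> S" "c \<in> S" "a < b \<and> b < c"
  define x where "x = (\<lambda>i::nat. if i = 0 then a else c)"
  define lam where "lam = (\<lambda>i::nat. if i = 0 then (real c - real b) / (real c - real a) else (real b - real a) / (real c - real a))"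
  have ca: "real c - real a > 0" using abc by simp
  have s2: "\<And>g::nat\<Rightarrow>real. (\<Sum>i<2. g i) = g 0 + g 1" by (simp add: numeral_2_eq_2)
  have c1: "\<forall>i<2. x i < n \<and> lam i \<ge> 0"
    using abc assms(2) ca by (auto simp: x_def lam_def less_Suc_eq numeral_2_eq_2)
  have c2: "(\<Sum>i<2. lam i) = 1"
  proof -
    have "(\<Sum>i<2. lam i) = (real c - real b) / (real c - real a) + (real b - real a) / (real c - real a)"
      by (simp add: s2 lam_def)
    also have "\<dots> = ((real c - real b) + (real b - real a)) / (real c - real a)"
      by (rule add_divide_distrib[symmetric])
    also have "\<dots> = 1" using ca by simp
    finally show ?thesis .
  qed
  have idn: "(real c - real b) * real a + (real b - real a) * real c = real b * (real c - real a)"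
    by (simp add: algebra_simps)
  have "(\<Sum>i<2. lam i * real (x i)) = (real c - real b) / (real c - real a) * real a + (real b - real a) / (real c - real a) * real c"
    by (simp add: s2 lam_def x_def)
  also have "\<dots> = ((real c - real b) * real a + (real b - real a) * real c) / (real c - real a)"
    by (simp add: add_divide_distrib)
  also have "\<dots> = real b" using ca by (simp only: idn) simp
  finally have c3: "(\<Sum>i<2. lam i * real (x i)) = real b" .
  have "f b \<le> (\<Sum>i<2. lam i * f (x i))"
    using assms(1) c1 c2 c3 abc assms(2) unfolding convex_on_grid_def by blast
  then have "f b \<le> (real c - real b) / (real c - real a) * f a + (real b - real a) / (real c - real a) * f c"
    by (simp add: s2 lam_def x_def)
  then have "(real c - real a) * f b \<le> (real c - real a) * ((real c - real b) / (real c - real a) * f a + (real b - real a) / (real c - real a) * f c)"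
    using ca by (simp add: mult_left_mono)
  also have "\<dots> = (real c - real b) * f a + (real b - real a) * f c" using ca by (simp add: distrib_left)
  finally show "(real c - real a) * f b \<le> (real c - real b) * f a + (real b - real a) * f c" .
qed

lemma grid1: "convex_on_grid 1 f"
  unfolding convex_on_grid_def
proof (intro allI impI)
  fix k :: nat and x :: "nat \<Rightarrow> nat" and lam :: "nat \<Rightarrow> real" and m :: nat
  assume h: "(\<forall>i<k. x i < 1 \<and> 0 \<le> lam i) \<and> sum lam {..<k} = 1 \<and> m < 1 \<and> (\<Sum>i<k. lam i * real (x i)) = real m"
  then have "(\<Sum>i<k. lam i * f (x i)) = (\<Sum>i<k. lam i * f 0)" by (intro sum.cong) auto
  also have "\<dots> = f 0" using h by (simp add: sum_distrib_right[symmetric])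
  finally show "f m \<le> (\<Sum>i<k. lam i * f (x i))" using h by simp
qed



lemma Lmul:
  fixes A B S fa fb :: real
  assumes "A < B"
  shows "(B - A) * (fa + (fb - fa) / (B - A) * (S - A)) = (B - A) * fa + (fb - fa) * (S - A)"
proof -
  have "(B - A) * ((fb - fa) / (B - A) * (S - A)) = (fb - fa) * (S - A)" using assms by simp
  then show ?thesis by (simp add: distrib_left)
qed

lemma lin1:
  fixes A B S fa fb fs :: real
  assumes "S < A" "A < B" "(B - S) * fa \<le> (B - A) * fs + (A - S) * fb"
  shows "fa + (fb - fa) / (B - A) * (S - A) \<le> fs"
proof -
  have "(B - A) * (fa + (fb - fa) / (B - A) * (S - A)) = (B - A) * fa + (fb - fa) * (S - A)"
    by (rule Lmul[OF assms(2)])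
  also have "\<dots> = (B - S) * fa - (A - S) * fb" by (simp add: algebra_simps)
  also have "\<dots> \<le> (B - A) * fs" using assms(3) by linarith
  finally show ?thesis using assms(2) by (simp add: mult_le_cancel_left_pos)
qed

lemma lin2:
  fixes A B S fa fb fs :: real
  assumes "A < B" "B < S" "(S - A) * fb \<le> (S - B) * fa + (B - A) * fs"
  shows "fa + (fb - fa) / (B - A) * (S - A) \<le> fs"
proof -
  have "(B - A) * (fa + (fb - fa) / (B - A) * (S - A)) = (B - A) * fa + (fb - fa) * (S - A)"
    by (rule Lmul[OF assms(1)])
  also have "\<dots> = (S - A) * fb - (S - B) * fa" by (simp add: algebra_simps)
  also have "\<dots> \<le> (B - A) * fs" using assms(3) by linarith
  finally show ?thesis using assms(1) by (simp add: mult_le_cancel_left_pos)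
qed

definition Lf :: "(nat \<Rightarrow> real) \<Rightarrow> nat \<times> nat \<Rightarrow> real \<Rightarrow> real" where
  "Lf f p y = f (fst p) + (f (snd p) - f (fst p)) / (real (snd p) - real (fst p)) * (y - real (fst p))"

lemma Lf_affine:
  fixes lam :: "nat \<Rightarrow> real"
  assumes "(\<Sum>i<k. lam i) = 1"
  shows "(\<Sum>i<k. lam i * Lf f p (real (x i))) = Lf f p (\<Sum>i<k. lam i * real (x i))"
proof -
  define \<beta> where "\<beta> = (f (snd p) - f (fst p)) / (real (snd p) - real (fst p))"
  define \<alpha> where "\<alpha> = f (fst p) - \<beta> * real (fst p)"
  have L0: "\<And>y. Lf f p y = f (fst p) + \<beta> * (y - real (fst p))" by (simp add: Lf_def \<beta>_def)
  have L: "\<And>y. Lf f p y = \<alpha> + \<beta> * y" unfolding L0 \<alpha>_def by (simp add: algebra_simps)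
  have "(\<Sum>i<k. lam i * Lf f p (real (x i))) = (\<Sum>i<k. \<alpha> * lam i + \<beta> * (lam i * real (x i)))"
    by (simp add: L algebra_simps)
  also have "\<dots> = \<alpha> * (\<Sum>i<k. lam i) + \<beta> * (\<Sum>i<k. lam i * real (x i))"
    by (simp add: sum.distrib sum_distrib_left)
  also have "\<dots> = Lf f p (\<Sum>i<k. lam i * real (x i))" using assms by (simp add: L)
  finally show ?thesis .
qed

lemma extension:
  fixes f :: "nat \<Rightarrow> real"
  assumes S: "S \<subseteq> {..<n}" and ab: "a0 \<in> S" "b0 \<in> S" "a0 < b0" and cv: "convS f S"
  shows "\<exists>h. convex_on_grid n h \<and> (\<forall>s\<in>S. h s = f s)"
proof -
  have finS: "finite S" using S finite_subset by blast
  define P where "P = {(a,b). a \<in> S \<and> b \<in> S \<and> a < b \<and> (\<forall>c\<in>S. \<not> (a < c \<and> c < b))}"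
  have finP: "finite P" by (rule finite_subset[of _ "S \<times> S"]) (auto simp: P_def finS)
  have Pin: "(a, b) \<in> P" if "a \<in> S" "b \<in> S" "a < b" "\<forall>c\<in>S. \<not> (a < c \<and> c < b)" for a b
    using that unfolding P_def by blast
  have succ: "(s, Min {c\<in>S. s < c}) \<in> P" if "s \<in> S" "\<exists>c\<in>S. s < c" for s
  proof -
    have fin: "finite {c\<in>S. s < c}" using finS by simp
    have ne: "{c\<in>S. s < c} \<noteq> {}" using that by auto
    have mi: "Min {c\<in>S. s < c} \<in> {c\<in>S. s < c}" by (rule Min_in[OF fin ne])
    have nb:  "\<forall>c\<in>S. \<not> (s < c \<and> c < Min {c\<in>S. s < c})"
    proof (intro ballI notI)
      fix c assume "c \<in> S" "s < c \<and> c < Min {c\<in>S. s < c}"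
      moreover have "Min {c\<in>S. s < c} \<le> c" using calculation by (intro Min_le[OF fin]) simp
      ultimately show False by simp
    qed
    from mi have "Min {c\<in>S. s < c} \<in> S" "s < Min {c\<in>S. s < c}" by simp_all
    then show ?thesis using Pin[OF that(1) _ _ nb] by blast
  qed
  have pred: "(Max {c\<in>S. c < s}, s) \<in> P" if "s \<in> S" "\<exists>c\<in>S. c < s" for s
  proof -
    have fin: "finite {c\<in>S. c < s}" using finS by simp
    have ne: "{c\<in>S. c < s} \<noteq> {}" using that by auto
    have mi: "Max {c\<in>S. c < s} \<in> {c\<in>S. c < s}" by (rule Max_in[OF fin ne])
    have nb:  "\<forall>c\<in>S. \<not> (Max {c\<in>S. c < s} < c \<and> c < s)"
    proof (intro ballI notI)
      fix c assume "c \<in> S" "Max {c\<in>S. c < s} < c \<and> c < s"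
      moreover have "c \<le> Max {c\<in>S. c < s}" using calculation by (intro Max_ge[OF fin]) simp
      ultimately show False by simp
    qed
    from mi have "Max {c\<in>S. c < s} \<in> S" "Max {c\<in>S. c < s} < s" by simp_all
    then show ?thesis using Pin[OF _ that(1) _ nb] by blast
  qed
  have "\<exists>c\<in>S. a0 < c" using ab by blast
  then have neP: "P \<noteq> {}" using succ[OF ab(1)] by blast
  define h where "h = (\<lambda>m::nat. Max ((\<lambda>p. Lf f p (real m)) ` P))"
  have h_ge: "Lf f p (real m) \<le> h m" if "p \<in> P" for p m
    unfolding h_def by (rule Max_ge) (simp add: finP, rule imageI[OF that])
  have h_in: "\<exists>p\<in>P. h m = Lf f p (real m)" for m
  proof -
    have "h m \<in> (\<lambda>p. Lf f p (real m)) ` P" unfolding h_def using finP neP by (intro Max_in) auto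
    then show ?thesis by auto
  qed
  have conv: "convex_on_grid n h"
    unfolding convex_on_grid_def
  proof (intro allI impI)
    fix k :: nat and x :: "nat \<Rightarrow> nat" and lam :: "nat \<Rightarrow> real" and m :: nat
    assume H: "(\<forall>i<k. x i < n \<and> 0 \<le> lam i) \<and> sum lam {..<k} = 1 \<and> m < n \<and> (\<Sum>i<k. lam i * real (x i)) = real m"
    obtain p where p: "p \<in> P" "h m = Lf f p (real m)" using h_in by blast
    have "h m = (\<Sum>i<k. lam i * Lf f p (real (x i)))" using p(2) H Lf_affine[where k=k and lam=lam and f=f and p=p and x=x] by simp
    also have "\<dots> \<le> (\<Sum>i<k. lam i * h (x i))"
    proof (rule sum_mono)
      fix i assume "i \<in> {..<k}"
      then have "0 \<le> lam i" using H by simp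
      then show "lam i * Lf f p (real (x i)) \<le> lam i * h (x i)" by (rule mult_left_mono[OF h_ge[OF p(1)]])
    qed
    finally show "h m \<le> (\<Sum>i<k. lam i * h (x i))" .
  qed
  have agree: "h s = f s" if s: "s \<in> S" for s
  proof (rule antisym)
    show "h s \<le> f s"
      unfolding h_def
    proof (subst Max_le_iff)
      show "finite ((\<lambda>p. Lf f p (real s)) ` P)" using finP by simp
      show "(\<lambda>p. Lf f p (real s)) ` P \<noteq> {}" using neP by simp
      show "\<forall>a\<in>(\<lambda>p. Lf f p (real s)) ` P. a \<le> f s"
      proof
        fix v assume "v \<in> (\<lambda>p. Lf f p (real s)) ` P"
        then obtain a b where pab: "(a,b) \<in> P" "v = Lf f (a,b) (real s)" by auto
        then have abS: "a \<in> S" "b \<in> S" "a < b" and gap: "\<not> (a < s \<and> s < b)" using s by (auto simp: P_def)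
        have v: "v = f a + (f b - f a) / (real b - real a) * (real s - real a)" using pab(2) by (simp add: Lf_def)
        have "s < a \<or> s = a \<or> s = b \<or> b < s" using gap by linarith
        then show "v \<le> f s"
        proof (elim disjE)
          assume "s < a"
          then have "(real b - real s) * f a \<le> (real b - real a) * f s + (real a - real s) * f b"
            using cv abS s unfolding convS_def by blast
          then show ?thesis unfolding v using \<open>s < a\<close> abS by (intro lin1) auto
        next
          assume "s = a" then show ?thesis using v by simp
        next
          assume "s = b" then show ?thesis using v abS by simp
        next
          assume "b < s"
          then have "(real s - real a) * f b \<le> (real s - real b) * f a + (real b - real a) * f s"
            using cv abS s unfolding convS_def by blast
          then show ?thesis unfolding v using \<open>b < s\<close> abS by (intro lin2) auto
        qed
      qed
    qed
    have "\<exists>p\<in>P. Lf f p (real s) = f s"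
    proof (cases "\<exists>c\<in>S. s < c")
      case True
      show ?thesis by (rule bexI[OF _ succ[OF s True]]) (simp add: Lf_def)
    next
      case False
      then have "\<not> s < b0" using ab(2) by blast
      then have "a0 < s" using ab(3) by linarith
      then have "\<exists>c\<in>S. c < s" using ab(1) by blast
      show ?thesis
      proof (rule bexI[OF _ pred[OF s \<open>\<exists>c\<in>S. c < s\<close>]])
        have "Max {c\<in>S. c < s} < s" using pred[OF s \<open>\<exists>c\<in>S. c < s\<close>] by (simp add: P_def)
        then show "Lf f (Max {c \<in> S. c < s}, s) (real s) = f s" by (simp add: Lf_def)
      qed
    qed
    then obtain p where "p \<in> P" "Lf f p (real s) = f s" by blast
    then show "f s \<le> h s" using h_ge[of p s] by simp
  qed
  show ?thesis using conv agree by blast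
qed



definition Tset :: "nat \<Rightarrow> nat \<Rightarrow> nat set" where
  "Tset n K = {v. v < n \<and> 2^K dvd v} \<union> {n - 1}"
definition NB :: "nat \<Rightarrow> nat set \<Rightarrow> nat set" where
  "NB n A = {u. u < n \<and> (\<exists>a\<in>A. u = a \<or> u = a + 1 \<or> u + 1 = a)}"
definition nodes :: "nat \<Rightarrow> nat \<Rightarrow> nat \<Rightarrow> nat set" where
  "nodes n K x = (DD K x \<inter> {..<n}) \<union> Tset n K"
definition Vset :: "nat \<Rightarrow> nat \<Rightarrow> nat set \<Rightarrow> nat set" where
  "Vset n K G = Tset n K \<union> (\<Union>x\<in>G. DD K x \<inter> {..<n})"

lemma NB_mono: "A \<subseteq> B \<Longrightarrow> NB n A \<subseteq> NB n B"
  unfolding NB_def by blast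

lemma NB_sub: "NB n A \<subseteq> {..<n}" unfolding NB_def by blast

lemma memV: "v \<in> Vset n K G \<longleftrightarrow> v \<in> Tset n K \<or> (\<exists>x\<in>G. v \<in> DD K x \<and> v < n)"
  unfolding Vset_def by blast

lemma pairs:
  assumes G: "G \<noteq> {}" and de: "d \<le> e" "d \<in> Vset n K G" "e \<in> Vset n K G"
    and gap: "\<forall>v\<in>Vset n K G. \<not> (d < v \<and> v < e)"
  shows "\<exists>x\<in>G. d \<in> nodes n K x \<and> e \<in> nodes n K x"
proof (cases "d \<in> Tset n K")
  case dT: True
  show ?thesis
  proof (cases "e \<in> Tset n K")
    case True
    obtain x where "x \<in> G" using G by blast
    then show ?thesis using dT True unfolding nodes_def by blast
  next
    case False
    then obtain y where "y \<in> G" "e \<in> DD K y" "e < n" using de(3) unfolding memV by blast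
    then show ?thesis using dT unfolding nodes_def by blast
  qed
next
  case dT: False
  then obtain x where x: "x \<in> G" "d \<in> DD K x" "d < n" using de(2) unfolding memV by blast
  show ?thesis
  proof (cases "e \<in> Tset n K")
    case True
    then show ?thesis using x unfolding nodes_def by blast
  next
    case eT: False
    then obtain y where y: "y \<in> G" "e \<in> DD K y" "e < n" using de(3) unfolding memV by blast
    have eK: "\<not> 2^K dvd e" using eT y(3) unfolding Tset_def by blast
    show ?thesis
    proof (cases "e \<in> DD K x")
      case True then show ?thesis using x y unfolding nodes_def by blast
    next
      case exn: False
      show ?thesis
      proof (cases "d \<in> DD K y")
        case True then show ?thesis using x y unfolding nodes_def by blast
      next
        case dny: False
        have "d \<noteq> e" using exn x(2) by blast
        then have "d < e" using de(1) by simp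
        have gap': "\<forall>v\<in>DD K y. \<not> (d < v \<and> v < e)"
        proof (intro ballI notI)
          fix v assume v: "v \<in> DD K y" "d < v \<and> v < e"
          then have "v < n" using y(3) by simp
          then have "v \<in> Vset n K G" unfolding memV using v(1) y(1) by blast
          then show False using gap v(2) by blast
        qed
        have "e \<in> DD K x" by (rule core[OF \<open>d < e\<close> x(2) y(2) dny eK gap'])
        then show ?thesis using exn by blast
      qed
    qed
  qed
qed

lemma nbhd:
  assumes V: "V \<subseteq> {..<n}" "0 \<in> V" "n - 1 \<in> V"
    and abc: "a \<in> NB n V" "b \<in> NB n V" "c \<in> NB n V" "a < b" "b < c"
    and cons1: "\<forall>u\<in>NB n V. \<not> (a < u \<and> u < b)" and cons2: "\<forall>u\<in>NB n V. \<not> (b < u \<and> u < c)"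
  shows "\<exists>d e. d \<le> e \<and> d \<in> V \<and> e \<in> V \<and> (\<forall>v\<in>V. \<not> (d < v \<and> v < e)) \<and>
      a \<in> NB n {d, e} \<and> b \<in> NB n {d, e} \<and> c \<in> NB n {d, e}"
proof -
  have finV: "finite V" using V(1) finite_subset by blast
  have bn: "b < n" using abc(2) unfolding NB_def by blast
  have cn: "c < n" using abc(3) unfolding NB_def by blast
  define d where "d = Max {v\<in>V. v \<le> b}"
  define e where "e = Min {v\<in>V. b \<le> v}"
  have f1: "finite {v\<in>V. v \<le> b}" "finite {v\<in>V. b \<le> v}" using finV by simp_all
  have n1: "{v\<in>V. v \<le> b} \<noteq> {}" using V(2) by blast
  have "b \<le> n - 1" using bn by simp
  then have n2: "{v\<in>V. b \<le> v} \<noteq> {}" using V(3) by blast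
  have dm: "d \<in> {v\<in>V. v \<le> b}" unfolding d_def by (rule Max_in[OF f1(1) n1])
  have em: "e \<in> {v\<in>V. b \<le> v}" unfolding e_def by (rule Min_in[OF f1(2) n2])
  have dV: "d \<in> V" "d \<le> b" using dm by simp_all
  have eV: "e \<in> V" "b \<le> e" using em by simp_all
  have gap: "\<forall>v\<in>V. \<not> (d < v \<and> v < e)"
  proof (intro ballI notI)
    fix v assume v: "v \<in> V" "d < v \<and> v < e"
    show False
    proof (cases "v \<le> b")
      case True
      then have "v \<le> d" unfolding d_def using v(1) by (intro Max_ge[OF f1(1)]) simp
      then show False using v(2) by simp
    next
      case False
      then have "e \<le> v" unfolding e_def using v(1) by (intro Min_le[OF f1(2)]) simp
      then show False using v(2) by simp
    qed
  qed
  have key: "u \<in> NB n {d, e}" if u: "u \<in> NB n V" "d \<le> u + 1" "u \<le> e + 1" for u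
  proof -
    obtain w where w: "w \<in> V" "u = w \<or> u = w + 1 \<or> u + 1 = w" and un: "u < n"
      using u(1) unfolding NB_def by blast
    have "w \<le> d \<or> e \<le> w" using gap w(1) by force
    then show ?thesis
    proof
      assume "w \<le> d"
      then have "u = d \<or> u = d + 1 \<or> u + 1 = d" using w(2) u(2) by linarith
      then show ?thesis using un unfolding NB_def by blast
    next
      assume "e \<le> w"
      then have "u = e \<or> u = e + 1 \<or> u + 1 = e" using w(2) u(3) by linarith
      then show ?thesis using un unfolding NB_def by blast
    qed
  qed
  have ad: "d \<le> a + 1"
  proof (cases "d = b")
    case True
    have "b - 1 \<in> NB n V" using True dV(1) bn abc(4) unfolding NB_def by force
    then have "\<not> (a < b - 1 \<and> b - 1 < b)" using cons1 by blast
    then show ?thesis using True abc(4) by linarith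
  next
    case False
    then have "d < b" using dV(2) by simp
    have "d \<in> NB n V" using dV(1) \<open>d < b\<close> bn unfolding NB_def by force
    then have "\<not> (a < d \<and> d < b)" using cons1 by blast
    then show ?thesis using \<open>d < b\<close> by linarith
  qed
  have ce: "c \<le> e + 1"
  proof (cases "e = b")
    case True
    have "b + 1 < n" using abc(5) cn by linarith
    then have "b + 1 \<in> NB n V" using True eV(1) unfolding NB_def by force
    then have "\<not> (b < b + 1 \<and> b + 1 < c)" using cons2 by blast
    then show ?thesis using True abc(5) by linarith
  next
    case False
    then have "b < e" using eV(2) by simp
    have "e < n" using eV(1) V(1) by blast
    then have "e \<in> NB n V" using eV(1) unfolding NB_def by force
    then have "\<not> (b < e \<and> e < c)" using cons2 by blast
    then show ?thesis using \<open>b < e\<close> by linarith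
  qed
  have "a \<in> NB n {d, e}" by (rule key[OF abc(1) ad]) (use abc(4) eV(2) in linarith)
  moreover have "b \<in> NB n {d, e}" by (rule key[OF abc(2)]) (use dV(2) eV(2) in linarith)+
  moreover have "c \<in> NB n {d, e}" by (rule key[OF abc(3) _ ce]) (use abc(5) dV(2) in linarith)
  moreover have "d \<le> e" using dV(2) eV(2) by simp
  ultimately show ?thesis using dV(1) eV(1) gap by blast
qed

lemma union_convex:
  assumes n: "1 \<le> n" and G: "G \<noteq> {}" and good: "\<forall>x\<in>G. convS f (NB n (nodes n K x))"
  shows "convS f (NB n (Vset n K G))"
proof (rule local_global)
  fix a b c
  assume abc: "a \<in> NB n (Vset n K G)" "b \<in> NB n (Vset n K G)" "c \<in> NB n (Vset n K G)" "a < b" "b < c"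
    and c1: "\<forall>u\<in>NB n (Vset n K G). \<not> (a < u \<and> u < b)" and c2: "\<forall>u\<in>NB n (Vset n K G). \<not> (b < u \<and> u < c)"
  have V1: "Vset n K G \<subseteq> {..<n}" using n unfolding Vset_def Tset_def by auto
  have V2: "0 \<in> Vset n K G" using n unfolding Vset_def Tset_def by simp
  have V3: "n - 1 \<in> Vset n K G" unfolding Vset_def Tset_def by simp
  obtain d e where de: "d \<le> e" "d \<in> Vset n K G" "e \<in> Vset n K G" "\<forall>v\<in>Vset n K G. \<not> (d < v \<and> v < e)"
    and m: "a \<in> NB n {d, e}" "b \<in> NB n {d, e}" "c \<in> NB n {d, e}"
    using nbhd[OF V1 V2 V3 abc c1 c2] by blast
  obtain x where x: "x \<in> G" "d \<in> nodes n K x" "e \<in> nodes n K x"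
    using pairs[OF G de] by blast
  have "NB n {d, e} \<subseteq> NB n (nodes n K x)" using x by (intro NB_mono) simp
  then have "a \<in> NB n (nodes n K x)" "b \<in> NB n (nodes n K x)" "c \<in> NB n (nodes n K x)" using m by blast+
  moreover have "convS f (NB n (nodes n K x))" using good x(1) by blast
  ultimately show "(real c - real a) * f b \<le> (real c - real b) * f a + (real b - real a) * f c"
    unfolding convS_def using abc(4,5) by blast
qed

lemma G_in_U: "G \<subseteq> {..<n} \<Longrightarrow> G \<subseteq> NB n (Vset n K G)"
proof
  fix x assume "G \<subseteq> {..<n}" "x \<in> G"
  then have "x < n" by blast
  then have "x \<in> Vset n K G" unfolding memV using \<open>x \<in> G\<close> self_in_DD by blast
  then show "x \<in> NB n (Vset n K G)" using \<open>x < n\<close> unfolding NB_def by blast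
qed



lemma sound_count:
  assumes n: "1 \<le> n" and eps: "\<epsilon> < 1" and far: "far_from_convex n \<epsilon> f"
  shows "real (card {x\<in>{..<n}. convS f (NB n (nodes n K x))}) \<le> (1 - \<epsilon>) * real n"
proof -
  define G where "G = {x\<in>{..<n}. convS f (NB n (nodes n K x))}"
  have Gsub: "G \<subseteq> {..<n}" unfolding G_def by blast
  have cardG: "card G \<le> n" using card_mono[OF _ Gsub] by simp
  show ?thesis
  proof (cases "n = 1")
    case True
    have "convex_on_grid n f" using True grid1 by simp
    then have "real (card {x\<in>{0..<n}. f x \<noteq> f x}) \<ge> \<epsilon> * real n" using far unfolding far_from_convex_def by blast
    then have "\<epsilon> \<le> 0" using True by simp
    then show ?thesis using cardG True unfolding G_def by simp
  next
    case False
    then have n2: "2 \<le> n" using n by simp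
    show ?thesis
    proof (cases "G = {}")
      case True
      then have "card G = 0" by simp
      then show ?thesis using eps unfolding G_def[symmetric] by simp
    next
      case False
      have good: "\<forall>x\<in>G. convS f (NB n (nodes n K x))" unfolding G_def by blast
      define U where "U = NB n (Vset n K G)"
      have cU: "convS f U" unfolding U_def by (rule union_convex[OF n False good])
      have U0: "0 \<in> U" using n unfolding U_def NB_def Vset_def Tset_def by force
      have U1: "n - 1 \<in> U" using n unfolding U_def NB_def Vset_def Tset_def by force
      have Usub: "U \<subseteq> {..<n}" unfolding U_def by (rule NB_sub)
      obtain h where h: "convex_on_grid n h" "\<forall>s\<in>U. h s = f s"
        using extension[OF Usub U0 U1 _ cU] n2 by auto
      have "real (card {x\<in>{0..<n}. f x \<noteq> h x}) \<ge> \<epsilon> * real n" using far h(1) unfolding far_from_convex_def by blast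
      moreover have "{x\<in>{0..<n}. f x \<noteq> h x} \<subseteq> {..<n} - G"
        using h(2) G_in_U[OF Gsub, of K] unfolding U_def by auto
      then have "card {x\<in>{0..<n}. f x \<noteq> h x} \<le> card ({..<n} - G)" by (intro card_mono) auto
      moreover have "card ({..<n} - G) = n - card G" using Gsub by (simp add: card_Diff_subset finite_subset)
      ultimately have "\<epsilon> * real n \<le> real (n - card G)" by linarith
      then show ?thesis using cardG unfolding G_def[symmetric] by (simp add: of_nat_diff algebra_simps)
    qed
  qed
qed

definition Qset :: "nat \<Rightarrow> nat \<Rightarrow> nat \<Rightarrow> (nat \<Rightarrow> nat) \<Rightarrow> nat set" where
  "Qset n K t xs = NB n (Tset n K \<union> (\<Union>i\<in>{..<t}. DD K (xs i) \<inter> {..<n}))"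

definition Omega :: "nat \<Rightarrow> nat \<Rightarrow> (nat \<Rightarrow> nat) set" where
  "Omega n t = PiE {..<t} (\<lambda>_. {..<n})"

definition tester :: "nat \<Rightarrow> nat \<Rightarrow> nat \<Rightarrow> (nat set \<times> ((nat \<Rightarrow> real) \<Rightarrow> bool)) pmf" where
  "tester n K t = map_pmf (\<lambda>xs. (Qset n K t xs, \<lambda>f. convS f (Qset n K t xs))) (pmf_of_set (Omega n t))"

lemma Omega_fin: "finite (Omega n t)" unfolding Omega_def by (intro finite_PiE) auto
lemma Omega_ne: "1 \<le> n \<Longrightarrow> Omega n t \<noteq> {}" unfolding Omega_def PiE_eq_empty_iff by (auto simp: lessThan_empty_iff)
lemma Omega_card: "card (Omega n t) = n ^ t" unfolding Omega_def by (simp add: card_PiE)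

lemma set_tester: "1 \<le> n \<Longrightarrow> set_pmf (tester n K t) = (\<lambda>xs. (Qset n K t xs, \<lambda>f. convS f (Qset n K t xs))) ` Omega n t"
  unfolding tester_def using Omega_fin Omega_ne by simp

lemma convS_cong: "(\<forall>x\<in>Q. f x = g x) \<Longrightarrow> convS f Q = convS g Q"
  unfolding convS_def by (intro iffI ballI impI; simp)

lemma accept_eq: "1 \<le> n \<Longrightarrow> accept_prob (tester n K t) f =
    real (card (Omega n t \<inter> {xs. convS f (Qset n K t xs)})) / real (card (Omega n t))"
proof -
  assume n: "1 \<le> n"
  have "accept_prob (tester n K t) f = measure (pmf_of_set (Omega n t)) {xs. convS f (Qset n K t xs)}"
    unfolding accept_prob_def tester_def by (simp add: vimage_def)
  also have "\<dots> = real (card (Omega n t \<inter> {xs. convS f (Qset n K t xs)})) / real (card (Omega n t))"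
    by (rule measure_pmf_of_set[OF Omega_ne[OF n] Omega_fin])
  finally show ?thesis .
qed

lemma Qset_sub: "Qset n K t xs \<subseteq> {..<n}" unfolding Qset_def by (rule NB_sub)

lemma nodes_sub_Q: "i < t \<Longrightarrow> NB n (nodes n K (xs i)) \<subseteq> Qset n K t xs"
  unfolding Qset_def nodes_def by (intro NB_mono) auto

lemma far_reject:
  assumes n: "1 \<le> n" and eps: "0 < \<epsilon>" "\<epsilon> < 1" and far: "far_from_convex n \<epsilon> f"
    and t: "2 \<le> \<epsilon> * real t"
  shows "accept_prob (tester n K t) f \<le> 1/3"
proof -
  define G where "G = {x\<in>{..<n}. convS f (NB n (nodes n K x))}"
  have cG: "real (card G) \<le> (1 - \<epsilon>) * real n" unfolding G_def by (rule sound_count[OF n eps(2) far])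
  have sub: "Omega n t \<inter> {xs. convS f (Qset n K t xs)} \<subseteq> PiE {..<t} (\<lambda>_. G)"
  proof
    fix xs assume xs: "xs \<in> Omega n t \<inter> {xs. convS f (Qset n K t xs)}"
    have "xs i \<in> G" if "i < t" for i
    proof -
      have "xs i < n" using xs that unfolding Omega_def by auto
      moreover have "convS f (NB n (nodes n K (xs i)))"
        using xs convS_subset nodes_sub_Q[OF that] by blast
      ultimately show ?thesis unfolding G_def by blast
    qed
    moreover have "xs i = undefined" if "i \<notin> {..<t}" for i using xs that unfolding Omega_def by auto
    ultimately show "xs \<in> PiE {..<t} (\<lambda>_. G)" by (auto simp: PiE_def extensional_def)
  qed
  have finG: "finite G" unfolding G_def by simp
  have "card (Omega n t \<inter> {xs. convS f (Qset n K t xs)}) \<le> card (PiE {..<t} (\<lambda>_. G))"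
    by (rule card_mono[OF _ sub]) (simp add: finite_PiE finG)
  also have "\<dots> = card G ^ t" by (simp add: card_PiE)
  finally have c1: "real (card (Omega n t \<inter> {xs. convS f (Qset n K t xs)})) \<le> real (card G) ^ t"
    by (metis of_nat_le_iff of_nat_power)
  have np: "0 < real n" using n by simp
  have "accept_prob (tester n K t) f \<le> real (card G) ^ t / real n ^ t"
    unfolding accept_eq[OF n] Omega_card using c1 np by (simp add: divide_right_mono)
  also have "\<dots> = (real (card G) / real n) ^ t" by (simp add: power_divide)
  also have "\<dots> \<le> (1 - \<epsilon>) ^ t"
  proof (rule power_mono)
    show "real (card G) / real n \<le> 1 - \<epsilon>" using cG np by (simp add: divide_le_eq)
    show "0 \<le> real (card G) / real n" by simp
  qed
  also have "\<dots> \<le> exp (- \<epsilon>) ^ t"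
    by (rule power_mono) (use exp_ge_add_one_self[of "- \<epsilon>"] eps in auto)
  also have "\<dots> = exp (- (\<epsilon> * real t))" by (simp add: exp_of_nat_mult[symmetric] mult.commute)
  also have "\<dots> \<le> exp (- 2)" using t by simp
  also have "\<dots> \<le> 1/3"
  proof -
    have "3 \<le> exp (2::real)" using exp_ge_add_one_self[of 2] by simp
    then show ?thesis by (simp add: exp_minus field_simps)
  qed
  finally show ?thesis .
qed

lemma convex_accept:
  assumes n: "1 \<le> n" and cv: "convex_on_grid n f"
  shows "accept_prob (tester n K t) f = 1"
proof -
  have "Omega n t \<inter> {xs. convS f (Qset n K t xs)} = Omega n t"
    using grid_convS[OF cv Qset_sub] by blast
  then show ?thesis unfolding accept_eq[OF n] using Omega_fin Omega_ne[OF n] by simp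
qed

lemma nonadaptive: "1 \<le> n \<Longrightarrow> nonadaptive_tester n (tester n K t)"
  unfolding nonadaptive_tester_def
proof
  fix z assume n: "1 \<le> n" and z: "z \<in> set_pmf (tester n K t)"
  then obtain xs where z: "z = (Qset n K t xs, \<lambda>f. convS f (Qset n K t xs))" using set_tester by auto
  have "Qset n K t xs \<subseteq> {0..<n}" by (simp add: atLeast0LessThan Qset_sub)
  moreover have "\<forall>f g. (\<forall>x\<in>Qset n K t xs. f x = g x) \<longrightarrow> convS f (Qset n K t xs) = convS g (Qset n K t xs)"
    using convS_cong by blast
  ultimately show "case z of (Q, D) \<Rightarrow> Q \<subseteq> {0..<n} \<and> (\<forall>f g. (\<forall>x\<in>Q. f x = g x) \<longrightarrow> D f = D g)"
    unfolding z by simp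
qed



lemma card_NB: "finite A \<Longrightarrow> card (NB n A) \<le> 3 * card A"
proof -
  assume fA: "finite A"
  have "NB n A \<subseteq> (\<Union>a\<in>A. {a, a + 1, a - 1})"
  proof (rule subsetI)
    fix u assume "u \<in> NB n A"
    then obtain a where a: "a \<in> A" "u = a \<or> u = a + 1 \<or> u + 1 = a" unfolding NB_def by blast
    then have "u \<in> {a, a + 1, a - 1}" by auto
    then show "u \<in> (\<Union>a\<in>A. {a, a + 1, a - 1})" using a(1) by blast
  qed
  then have "card (NB n A) \<le> card (\<Union>a\<in>A. {a, a + 1, a - 1})"
    by (intro card_mono) (simp_all add: fA)
  also have "\<dots> \<le> (\<Sum>a\<in>A. card {a, a + 1, a - 1})" by (rule card_UN_le[OF fA])
  also have "\<dots> \<le> (\<Sum>a\<in>A. 3)" by (intro sum_mono) (simp add: card_insert_le_m1)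
  also have "\<dots> = 3 * card A" by simp
  finally show ?thesis .
qed

lemma card_DD: "card (DD K y) \<le> 2 * (K + 1)"
proof -
  have "card (DD K y) \<le> (\<Sum>j\<in>{..K}. card {lo j y, hi j y})" unfolding DD_def by (rule card_UN_le) simp
  also have "\<dots> \<le> (\<Sum>j\<in>{..K}. 2)" by (intro sum_mono) (simp add: card_insert_le_m1)
  also have "\<dots> = 2 * (K + 1)" by simp
  finally show ?thesis .
qed

lemma finite_DD: "finite (DD K y)" unfolding DD_def by simp

lemma card_Tset: "card (Tset n K) \<le> n div 2^K + 2"
proof -
  have "{v. v < n \<and> 2^K dvd v} \<subseteq> (\<lambda>c. c * 2^K) ` {..n div 2^K}"
  proof
    fix v assume v: "v \<in> {v. v < n \<and> 2^K dvd v}"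
    then obtain c where c: "v = c * 2^K" by (auto elim: dvdE simp: mult.commute)
    have "c = v div 2^K" using c by simp
    also have "\<dots> \<le> n div 2^K" using v by (intro div_le_mono) simp
    finally show "v \<in> (\<lambda>c. c * 2^K) ` {..n div 2^K}" using c by blast
  qed
  then have "card {v. v < n \<and> 2^K dvd v} \<le> card ((\<lambda>c. c * 2^K) ` {..n div 2^K})"
    by (intro card_mono) simp_all
  also have "\<dots> \<le> card {..n div 2^K}" by (rule card_image_le) simp
  finally have c1: "card {v. v < n \<and> 2^K dvd v} \<le> n div 2^K + 1" by simp
  have "card (Tset n K) \<le> card {v. v < n \<and> 2^K dvd v} + card {n - 1}"
    unfolding Tset_def by (rule card_Un_le)
  then show ?thesis using c1 by simp
qed

lemma finite_Tset: "finite (Tset n K)" unfolding Tset_def by simp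

lemma card_Qset: "card (Qset n K t xs) \<le> 3 * (n div 2^K + 2 + t * (2 * (K + 1)))"
proof -
  define A where "A = Tset n K \<union> (\<Union>i\<in>{..<t}. DD K (xs i) \<inter> {..<n})"
  have fA: "finite A" unfolding A_def using finite_Tset by simp
  have "card A \<le> card (Tset n K) + card (\<Union>i\<in>{..<t}. DD K (xs i) \<inter> {..<n})"
    unfolding A_def by (rule card_Un_le)
  also have "card (\<Union>i\<in>{..<t}. DD K (xs i) \<inter> {..<n}) \<le> (\<Sum>i\<in>{..<t}. card (DD K (xs i) \<inter> {..<n}))"
    by (rule card_UN_le) simp
  also have "\<dots> \<le> (\<Sum>i\<in>{..<t}. 2 * (K + 1))"
  proof (rule sum_mono)
    fix i
    have "card (DD K (xs i) \<inter> {..<n}) \<le> card (DD K (xs i))" by (intro card_mono finite_DD) auto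
    then show "card (DD K (xs i) \<inter> {..<n}) \<le> 2 * (K + 1)" using card_DD[of K "xs i"] by linarith
  qed
  also have "\<dots> = t * (2 * (K + 1))" by simp
  finally have "card A \<le> n div 2^K + 2 + t * (2 * (K + 1))" using card_Tset[of n K] by linarith
  moreover have "card (Qset n K t xs) \<le> 3 * card A" unfolding Qset_def A_def[symmetric] by (rule card_NB[OF fA])
  ultimately show ?thesis using mult_le_mono2[of "card A" _ 3] order_trans by blast
qed

lemma card_Qset_n: "card (Qset n K t xs) \<le> n"
  using card_mono[OF _ Qset_sub[of n K t xs]] by simp

lemma exK:
  fixes x :: real assumes x: "1 \<le> x"
  shows "\<exists>K::nat. 2^K \<le> x \<and> x < 2^(K+1)"
proof -
  have ex: "\<exists>k::nat. x < 2^(k+1)"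
  proof -
    obtain k :: nat where "x < 2^k" using real_arch_pow[of 2 x] by auto
    moreover have "(2::real)^k \<le> 2^(k+1)" by (rule power_increasing) simp_all
    ultimately have "x < 2^(k+1)" by linarith
    then show ?thesis by blast
  qed
  define K where "K = (LEAST k::nat. x < 2^(k+1))"
  have K1: "x < 2^(K+1)" unfolding K_def by (rule LeastI_ex[OF ex])
  have K2: "2^K \<le> x"
  proof (cases K)
    case 0 then show ?thesis using x by simp
  next
    case (Suc k)
    have "\<not> x < 2^(k+1)"
    proof
      assume "x < 2^(k+1)"
      then have "K \<le> k" unfolding K_def by (rule Least_le)
      then show False using Suc by simp
    qed
    then show ?thesis using Suc by simp
  qed
  show ?thesis using K1 K2 by blast
qed

lemma K_le_ln:
  fixes x :: real assumes "2^K \<le> x"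
  shows "real K \<le> 2 * ln x"
proof -
  have p: "(0::real) < 2^K" by simp
  have xp: "0 < x" using order.strict_trans2[OF p assms] .
  have "ln (2^K) \<le> ln x" using assms p xp by (subst ln_le_cancel_iff) auto
  then have "real K * ln 2 \<le> ln x" by (simp add: ln_realpow)
  moreover have "2/3 \<le> ln (2::real)" by (rule ln2_ge_two_thirds)
  then have "real K * (2/3) \<le> real K * ln 2" by (rule mult_left_mono) simp
  ultimately have "real K * (2/3) \<le> ln x" by linarith
  then show ?thesis by simp
qed



theorem theorem1p1:
  shows "\<exists>C>0. \<forall>(n::nat) (\<epsilon>::real). n \<ge> 1 \<and> 0 < \<epsilon> \<and> \<epsilon> < 1 \<longrightarrow>
           (\<exists>T. one_sided_convexity_tester n \<epsilon> T \<and>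
                query_complexity_le T (C * max 1 (ln (\<epsilon> * real n)) / \<epsilon>))"
proof (intro exI[of _ 100] conjI allI impI)
  show "(0::real) < 100" by simp
  fix n :: nat and \<epsilon> :: real assume H: "n \<ge> 1 \<and> 0 < \<epsilon> \<and> \<epsilon> < 1"
  then have n: "1 \<le> n" and e: "0 < \<epsilon>" "\<epsilon> < 1" by auto
  define E where "E = 1 / \<epsilon>"
  have E1: "1 \<le> E" unfolding E_def using e by simp
  define t where "t = nat \<lceil>2 / \<epsilon>\<rceil>"
  have t1: "2 / \<epsilon> \<le> real t" unfolding t_def by (rule real_nat_ceiling_ge)
  have "real t = real_of_int \<lceil>2 / \<epsilon>\<rceil>" unfolding t_def using e by simp
  then have "real t < 2 / \<epsilon> + 1" by linarith
  then have t2: "real t \<le> 3 * E" using E1 unfolding E_def by simp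
  have et: "2 \<le> \<epsilon> * real t"
  proof -
    have "\<epsilon> * (2 / \<epsilon>) \<le> \<epsilon> * real t" using t1 e by (intro mult_left_mono) simp_all
    then show ?thesis using e by simp
  qed
  define M where "M = max 1 (ln (\<epsilon> * real n))"
  have M1: "1 \<le> M" unfolding M_def by simp
  have EM: "E \<le> E * M" using M1 E1 by simp
  have goal_form: "100 * M / \<epsilon> = 100 * (E * M)" unfolding E_def by simp
  have "\<exists>K. \<forall>xs. real (card (Qset n K t xs)) \<le> 100 * (E * M)"
  proof (cases "1 \<le> \<epsilon> * real n")
    case True
    obtain K :: nat where K: "2^K \<le> \<epsilon> * real n" "\<epsilon> * real n < 2^(K+1)" using exK[OF True] by blast
    have KM: "real K \<le> 2 * M"
      using K_le_ln[OF K(1)] unfolding M_def by linarith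
    have K3: "real (K + 1) \<le> 3 * M" using KM M1 by simp
    have A: "real (n div 2^K) \<le> 2 * E"
    proof -
      have "real (n div 2^K) \<le> real n / real (2^K)" by (rule of_nat_div_le_of_nat)
      also have "\<dots> \<le> 2 * E"
      proof -
        have p: "(0::real) < 2^K" by simp
        have "\<epsilon> * real n < 2 * 2^K" using K(2) by simp
        then have "real n < 2 * 2^K / \<epsilon>" using e by (simp add: field_simps)
        then have "real n / 2^K < 2 / \<epsilon>" using p by (simp add: field_simps)
        then show ?thesis unfolding E_def by simp
      qed
      finally show ?thesis .
    qed
    have tK: "real t * real (K + 1) \<le> (3 * E) * (3 * M)"
      by (rule mult_mono[OF t2 K3]) (use E1 in simp_all)
    show ?thesis
    proof (intro exI allI)
      fix xs
      have "card (Qset n K t xs) \<le> 3 * (n div 2^K + 2 + t * (2 * (K + 1)))" by (rule card_Qset)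
      then have "real (card (Qset n K t xs)) \<le> real (3 * (n div 2^K + 2 + t * (2 * (K + 1))))"
        by (rule of_nat_mono)
      also have "\<dots> = 3 * (real (n div 2^K) + 2 + 2 * (real t * real (K + 1)))"
        by (simp add: algebra_simps)
      also have "\<dots> \<le> 3 * (2 * E + 2 * E + 2 * ((3 * E) * (3 * M)))" using A tK E1 by simp
      also have "\<dots> = 12 * E + 54 * (E * M)" by (simp add: algebra_simps)
      also have "\<dots> \<le> 100 * (E * M)" using EM E1 by linarith
      finally show "real (card (Qset n K t xs)) \<le> 100 * (E * M)" .
    qed
  next
    case False
    show ?thesis
    proof (intro exI allI)
      fix xs
      have "real (card (Qset n 0 t xs)) \<le> real n" using card_Qset_n by simp
      also have "\<dots> \<le> E" using False e unfolding E_def by (simp add: field_simps)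
      also have "\<dots> \<le> 100 * (E * M)" using EM E1 by simp
      finally show "real (card (Qset n 0 t xs)) \<le> 100 * (E * M)" .
    qed
  qed
  then obtain K where K: "\<And>xs. real (card (Qset n K t xs)) \<le> 100 * (E * M)" by blast
  show "\<exists>T. one_sided_convexity_tester n \<epsilon> T \<and> query_complexity_le T (100 * max 1 (ln (\<epsilon> * real n)) / \<epsilon>)"
  proof (intro exI conjI)
    show "one_sided_convexity_tester n \<epsilon> (tester n K t)"
      unfolding one_sided_convexity_tester_def
      using nonadaptive[OF n] convex_accept[OF n] far_reject[OF n e _ et] by blast
    show "query_complexity_le (tester n K t) (100 * max 1 (ln (\<epsilon> * real n)) / \<epsilon>)"
      unfolding query_complexity_le_def M_def[symmetric] goal_form set_tester[OF n]
      using K by auto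
  qed
qed

end
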